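(* Let $(M,g)$ be a $2$-dimensional Riemannian manifold with Levi-Civita connection $\nabla$, and let $h=h_{ij}dx^i\otimes dx^j$ be a smooth symmetric Codazzi tensor, i.e. $h_{ij}=h_{ji}$ and $\nabla_ih_{jk}=\nabla_jh_{ik}$ for all $i,j,k$. Let $H=g^{ij}h_{ij}$ and $\mathring{h}_{ij}:=h_{ij}-\frac{H}{2}g_{ij}$. Then \[ 2|\mathring{h}|^2\bigl(|\nabla h|^2-|\nabla H|^2\bigr)=\bigl|\nabla|\mathring{h}|^2\bigr|^2-2\,\mathring{h}_{ij}\,\nabla^i|\mathring{h}|^2\,\nabla^jH . \]
   Context: All norms and contractions are taken with respect to $g$, e.g. $|\mathring h|^2=g^{ik}g^{jl}\mathring h_{ij}\mathring h_{kl}$, $|\nabla h|^2=g^{ia}g^{jb}g^{kc}\nabla_ih_{jk}\nabla_ah_{bc}$, and $\nabla^i=g^{ij}\nabla_j$. *)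

theory Defs
  imports "HOL-Analysis.Analysis"
begin

text \<open>Local coordinate model of a 2-dimensional Riemannian manifold: an open
set U of R^2 (coordinates x^1, x^2, indexed by the type 2), with metric
components g i j and tensor components h i j as real functions on U.\<close>

type_synonym pt = "real ^ 2"

definition pd :: "2 \<Rightarrow> (pt \<Rightarrow> real) \<Rightarrow> pt \<Rightarrow> real" where
  "pd i f x = frechet_derivative f (at x) (axis i 1)"

fun Ck_on :: "nat \<Rightarrow> pt set \<Rightarrow> (pt \<Rightarrow> real) \<Rightarrow> bool" where
  "Ck_on 0 U f = continuous_on U f"
| "Ck_on (Suc k) U f = (f differentiable_on U \<and> continuous_on U f \<and> (\<forall>i. Ck_on k U (pd i f)))"

definition smooth_on :: "pt set \<Rightarrow> (pt \<Rightarrow> real) \<Rightarrow> bool" where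
  "smooth_on U f = (\<forall>k. Ck_on k U f)"

definition riem_metric :: "pt set \<Rightarrow> (2 \<Rightarrow> 2 \<Rightarrow> pt \<Rightarrow> real) \<Rightarrow> bool" where
  "riem_metric U g = (open U \<and> (\<forall>i j. smooth_on U (g i j)) \<and>
     (\<forall>x\<in>U. (\<forall>i j. g i j x = g j i x) \<and>
        (\<forall>v::real^2. v \<noteq> 0 \<longrightarrow> (\<Sum>i\<in>UNIV. \<Sum>j\<in>UNIV. g i j x * v$i * v$j) > 0)))"

definition ginv :: "(2 \<Rightarrow> 2 \<Rightarrow> pt \<Rightarrow> real) \<Rightarrow> 2 \<Rightarrow> 2 \<Rightarrow> pt \<Rightarrow> real" where
  "ginv g i j x = matrix_inv (\<chi> a b. g a b x) $ i $ j"

definition christoffel :: "(2 \<Rightarrow> 2 \<Rightarrow> pt \<Rightarrow> real) \<Rightarrow> 2 \<Rightarrow> 2 \<Rightarrow> 2 \<Rightarrow> pt \<Rightarrow> real" where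
  "christoffel g k i j x = (1/2) * (\<Sum>l\<in>UNIV. ginv g k l x *
      (pd i (g j l) x + pd j (g i l) x - pd l (g i j) x))"

definition covD :: "(2 \<Rightarrow> 2 \<Rightarrow> pt \<Rightarrow> real) \<Rightarrow> (2 \<Rightarrow> 2 \<Rightarrow> pt \<Rightarrow> real) \<Rightarrow> 2 \<Rightarrow> 2 \<Rightarrow> 2 \<Rightarrow> pt \<Rightarrow> real" where
  "covD g h i j k x = pd i (h j k) x
     - (\<Sum>l\<in>UNIV. christoffel g l i j x * h l k x)
     - (\<Sum>l\<in>UNIV. christoffel g l i k x * h j l x)"

definition trH :: "(2 \<Rightarrow> 2 \<Rightarrow> pt \<Rightarrow> real) \<Rightarrow> (2 \<Rightarrow> 2 \<Rightarrow> pt \<Rightarrow> real) \<Rightarrow> pt \<Rightarrow> real" where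
  "trH g h x = (\<Sum>i\<in>UNIV. \<Sum>j\<in>UNIV. ginv g i j x * h i j x)"

definition traceless :: "(2 \<Rightarrow> 2 \<Rightarrow> pt \<Rightarrow> real) \<Rightarrow> (2 \<Rightarrow> 2 \<Rightarrow> pt \<Rightarrow> real) \<Rightarrow> 2 \<Rightarrow> 2 \<Rightarrow> pt \<Rightarrow> real" where
  "traceless g h i j x = h i j x - trH g h x / 2 * g i j x"

definition norm2_2 :: "(2 \<Rightarrow> 2 \<Rightarrow> pt \<Rightarrow> real) \<Rightarrow> (2 \<Rightarrow> 2 \<Rightarrow> pt \<Rightarrow> real) \<Rightarrow> pt \<Rightarrow> real" where
  "norm2_2 g T x = (\<Sum>i\<in>UNIV. \<Sum>j\<in>UNIV. \<Sum>k\<in>UNIV. \<Sum>l\<in>UNIV.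
      ginv g i k x * ginv g j l x * T i j x * T k l x)"

definition norm2_3 :: "(2 \<Rightarrow> 2 \<Rightarrow> pt \<Rightarrow> real) \<Rightarrow> (2 \<Rightarrow> 2 \<Rightarrow> 2 \<Rightarrow> pt \<Rightarrow> real) \<Rightarrow> pt \<Rightarrow> real" where
  "norm2_3 g T x = (\<Sum>i\<in>UNIV. \<Sum>j\<in>UNIV. \<Sum>k\<in>UNIV. \<Sum>a\<in>UNIV. \<Sum>b\<in>UNIV. \<Sum>c\<in>UNIV.
      ginv g i a x * ginv g j b x * ginv g k c x * T i j k x * T a b c x)"

definition grad_norm2 :: "(2 \<Rightarrow> 2 \<Rightarrow> pt \<Rightarrow> real) \<Rightarrow> (pt \<Rightarrow> real) \<Rightarrow> pt \<Rightarrow> real" where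
  "grad_norm2 g f x = (\<Sum>i\<in>UNIV. \<Sum>j\<in>UNIV. ginv g i j x * pd i f x * pd j f x)"

end

theory Submission
  imports Defs
begin


lemma pd_has: "(f has_derivative f') (at x) \<Longrightarrow> pd i f x = f' (axis i 1)"
  using frechet_derivative_at[of f f' x] by (simp add: pd_def)

thm_deps pd_has

lemma pd_mult:
  assumes "f differentiable at x" "g differentiable at x"
  shows "pd i (\<lambda>y. f y * g y) x = f x * pd i g x + pd i f x * g x"
proof -
  have "((\<lambda>y. f y * g y) has_derivative
     (\<lambda>v. f x * frechet_derivative g (at x) v + frechet_derivative f (at x) v * g x)) (at x)"
    by (rule has_derivative_mult) (use assms frechet_derivative_works in blast)+
  from pd_has[OF this, of i] show ?thesis by (simp add: pd_def)
qed

thm_deps pd_mult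

lemma pd_add:
  assumes "f differentiable at x" "g differentiable at x"
  shows "pd i (\<lambda>y. f y + g y) x = pd i f x + pd i g x"
proof -
  have "((\<lambda>y. f y + g y) has_derivative
     (\<lambda>v. frechet_derivative f (at x) v + frechet_derivative g (at x) v)) (at x)"
    by (rule has_derivative_add) (use assms frechet_derivative_works in blast)+
  from pd_has[OF this, of i] show ?thesis by (simp add: pd_def)
qed

thm_deps pd_add

lemma pd_diff:
  assumes "f differentiable at x" "g differentiable at x"
  shows "pd i (\<lambda>y. f y - g y) x = pd i f x - pd i g x"
proof -
  have "((\<lambda>y. f y - g y) has_derivative
     (\<lambda>v. frechet_derivative f (at x) v - frechet_derivative g (at x) v)) (at x)"
    by (rule has_derivative_diff) (use assms frechet_derivative_works in blast)+
  from pd_has[OF this, of i] show ?thesis by (simp add: pd_def)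
qed

thm_deps pd_diff

lemma pd_divide:
  assumes "f differentiable at x" "g differentiable at x" "g x \<noteq> 0"
  shows "pd i (\<lambda>y. f y / g y) x = (pd i f x * g x - f x * pd i g x) / (g x * g x)"
proof -
  have "((\<lambda>y. f y / g y) has_derivative
     (\<lambda>v. (frechet_derivative f (at x) v * g x - f x * frechet_derivative g (at x) v) / (g x * g x))) (at x)"
    by (rule has_derivative_divide') (use assms frechet_derivative_works in blast)+
  from pd_has[OF this, of i] show ?thesis by (simp add: pd_def)
qed

thm_deps pd_divide

lemma pd_const: "pd i (\<lambda>y. c) x = 0"
  by (rule pd_has[where f'="\<lambda>_. 0", simplified]) simp

thm_deps pd_const

lemma pd_cmult:
  assumes "f differentiable at x"
  shows "pd i (\<lambda>y. c * f y) x = c * pd i f x"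
  using pd_mult[of "\<lambda>y. c" x f i] assms by (simp add: pd_const)

thm_deps pd_cmult

lemma pd_sum:
  assumes "finite A" "\<forall>a\<in>A. f a differentiable at x"
  shows "pd i (\<lambda>y. \<Sum>a\<in>A. f a y) x = (\<Sum>a\<in>A. pd i (f a) x)"
proof -
  have "((\<lambda>y. \<Sum>a\<in>A. f a y) has_derivative
     (\<lambda>v. \<Sum>a\<in>A. frechet_derivative (f a) (at x) v)) (at x)"
    by (rule has_derivative_sum) (use assms frechet_derivative_works in blast)
  from pd_has[OF this, of i] show ?thesis by (simp add: pd_def)
qed

thm_deps pd_sum

lemma pd_local:
  assumes "open U" "x \<in> U" "\<And>y. y \<in> U \<Longrightarrow> f y = f2 y" "f2 differentiable at x"
  shows "pd i f x = pd i f2 x"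
  unfolding pd_def using frechet_derivative_transform_within_open[of f2 x U f] assms by metis

thm_deps pd_local

lemma diff_local:
  assumes "open U" "x \<in> U" "\<And>y. y \<in> U \<Longrightarrow> f y = f2 y" "f2 differentiable at x"
  shows "f differentiable at x"
  using assms unfolding differentiable_def
  by (metis has_derivative_transform_within_open)



thm_deps diff_local

lemma inv2:
  fixes A :: "real^2^2"
  assumes d: "A$1$1 * A$2$2 - A$1$2 * A$2$1 \<noteq> 0"
  shows "matrix_inv A = (\<chi> i j. (if i = 1 then (if j = 1 then A$2$2 else - A$1$2)
      else (if j = 1 then - A$2$1 else A$1$1)) / (A$1$1 * A$2$2 - A$1$2 * A$2$1))"
    (is "_ = ?B")
proof -
  have AB: "A ** ?B = mat 1"
    using d by (auto simp: vec_eq_iff forall_2 matrix_matrix_mult_def sum_2 mat_def field_simps; algebra)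
  have BA: "?B ** A = mat 1"
    using d by (auto simp: vec_eq_iff forall_2 matrix_matrix_mult_def sum_2 mat_def field_simps; algebra)
  let ?M = "matrix_inv A"
  have M: "A ** ?M = mat 1 \<and> ?M ** A = mat 1"
    unfolding matrix_inv_def by (rule someI[of _ ?B]) (use AB BA in blast)
  have "?M = ?M ** (A ** ?B)" by (simp add: AB matrix_mul_rid)
  also have "\<dots> = (?M ** A) ** ?B" by (simp add: matrix_mul_assoc)
  also have "\<dots> = ?B" using M by (simp add: matrix_mul_lid)
  finally show ?thesis .
qed



thm_deps inv2

context
  fixes U :: "pt set" and g h :: "2 \<Rightarrow> 2 \<Rightarrow> pt \<Rightarrow> real"
  assumes metric: "riem_metric U g" and h_smooth: "\<forall>i j. smooth_on U (h i j)"
    and h_sym: "\<forall>y\<in>U. \<forall>i j. h i j y = h j i y"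
begin

lemma openU: "open U" using metric by (simp add: riem_metric_def)

thm_deps openU

lemma g_diff: "y \<in> U \<Longrightarrow> g i j differentiable at y"
proof -
  assume y: "y \<in> U"
  have "Ck_on (Suc 0) U (g i j)" using metric unfolding riem_metric_def smooth_on_def by blast
  then have "g i j differentiable_on U" by simp
  with openU y show ?thesis by (simp add: differentiable_on_eq_differentiable_at)
qed

thm_deps g_diff

lemma h_diff: "y \<in> U \<Longrightarrow> h i j differentiable at y"
proof -
  assume y: "y \<in> U"
  have "Ck_on (Suc 0) U (h i j)" using h_smooth unfolding smooth_on_def by blast
  then have "h i j differentiable_on U" by simp
  with openU y show ?thesis by (simp add: differentiable_on_eq_differentiable_at)
qed

thm_deps h_diff

lemma g_sym: "y \<in> U \<Longrightarrow> g i j y = g j i y"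
  using metric by (simp add: riem_metric_def)

thm_deps g_sym

lemma det_pos: "y \<in> U \<Longrightarrow> g 1 1 y * g 2 2 y - g 1 2 y * g 2 1 y > 0"
proof -
  assume y: "y \<in> U"
  have pd: "\<And>v::real^2. v \<noteq> 0 \<Longrightarrow> (\<Sum>i\<in>UNIV. \<Sum>j\<in>UNIV. g i j y * v$i * v$j) > 0"
    using metric y by (simp add: riem_metric_def)
  have "(axis 1 1 :: real^2) \<noteq> 0" by (simp add: axis_eq_0_iff)
  from pd[OF this] have a: "g 1 1 y > 0" by (simp add: sum_2 axis_def)
  let ?v = "vector [g 1 2 y, - g 1 1 y] :: real^2"
  have "?v \<noteq> 0" using a by (auto simp: vec_eq_iff forall_2)
  from pd[OF this] have "g 1 1 y * (g 1 1 y * g 2 2 y - g 1 2 y * g 2 1 y) > 0"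
    using g_sym[OF y, of 2 1] by (simp add: sum_2 algebra_simps power2_eq_square)
  with a show ?thesis by (simp add: zero_less_mult_iff)
qed

thm_deps det_pos

lemma ginv_formula:
  assumes y: "y \<in> U"
  shows "ginv g 1 1 y = g 2 2 y / (g 1 1 y * g 2 2 y - g 1 2 y * g 2 1 y)"
    "ginv g 1 2 y = - g 1 2 y / (g 1 1 y * g 2 2 y - g 1 2 y * g 2 1 y)"
    "ginv g 2 1 y = - g 2 1 y / (g 1 1 y * g 2 2 y - g 1 2 y * g 2 1 y)"
    "ginv g 2 2 y = g 1 1 y / (g 1 1 y * g 2 2 y - g 1 2 y * g 2 1 y)"
  using inv2[of "\<chi> a b. g a b y"] det_pos[OF y] by (simp_all add: ginv_def)

thm_deps ginv_formula

lemma dg_sym: "x \<in> U \<Longrightarrow> pd k (g i j) x = pd k (g j i) x"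
  by (rule pd_local[OF openU]) (auto simp: g_sym g_diff)

thm_deps dg_sym

lemma dh_sym: "x \<in> U \<Longrightarrow> pd k (h i j) x = pd k (h j i) x"
  by (rule pd_local[OF openU]) (use h_sym in \<open>auto simp: h_diff\<close>)

thm_deps dh_sym

lemma ginv_local:
  assumes x: "x \<in> U"
  shows "\<exists>f. (\<forall>y\<in>U. ginv g i j y = f y / (g 1 1 y * g 2 2 y - g 1 2 y * g 2 1 y))
      \<and> (f = g 2 2 \<or> f = g 1 1 \<or> f = (\<lambda>y. - g 1 2 y) \<or> f = (\<lambda>y. - g 2 1 y))
      \<and> (i = 1 \<and> j = 1 \<longrightarrow> f = g 2 2) \<and> (i = 2 \<and> j = 2 \<longrightarrow> f = g 1 1)
      \<and> (i = 1 \<and> j = 2 \<longrightarrow> f = (\<lambda>y. - g 1 2 y)) \<and> (i = 2 \<and> j = 1 \<longrightarrow> f = (\<lambda>y. - g 2 1 y))"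
proof -
  have "i = 1 \<or> i = 2" "j = 1 \<or> j = 2" using exhaust_2 by auto
  then show ?thesis
    apply (elim disjE)
      apply (rule exI[of _ "g 2 2"], simp add: ginv_formula)
     apply (rule exI[of _ "\<lambda>y. - g 1 2 y"], simp add: ginv_formula)
    apply (rule exI[of _ "\<lambda>y. - g 2 1 y"], simp add: ginv_formula)
    apply (rule exI[of _ "g 1 1"], simp add: ginv_formula)
    done
qed

thm_deps ginv_local

lemma ginv_diff:
  assumes x: "x \<in> U"
  shows "ginv g i j differentiable at x"
proof -
  obtain f where f: "\<forall>y\<in>U. ginv g i j y = f y / (g 1 1 y * g 2 2 y - g 1 2 y * g 2 1 y)"
      "f = g 2 2 \<or> f = g 1 1 \<or> f = (\<lambda>y. - g 1 2 y) \<or> f = (\<lambda>y. - g 2 1 y)"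
    using ginv_local[OF x, of i j] by (elim exE conjE) (rule that; assumption)
  have "f differentiable at x" using f(2) g_diff[OF x] by auto
  then have F: "(\<lambda>y. f y / (g 1 1 y * g 2 2 y - g 1 2 y * g 2 1 y)) differentiable at x"
    using g_diff[OF x] det_pos[OF x] by simp
  show ?thesis by (rule diff_local[OF openU x _ F]) (use f(1) in auto)
qed

thm_deps ginv_diff

lemma dP:
  assumes x: "x \<in> U"
  shows "pd k (ginv g i j) x = - (\<Sum>a\<in>UNIV. \<Sum>b\<in>UNIV. ginv g i a x * pd k (g a b) x * ginv g b j x)"
proof -
  obtain f where f: "\<forall>y\<in>U. ginv g i j y = f y / (g 1 1 y * g 2 2 y - g 1 2 y * g 2 1 y)"
      "f = g 2 2 \<or> f = g 1 1 \<or> f = (\<lambda>y. - g 1 2 y) \<or> f = (\<lambda>y. - g 2 1 y)"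
      "(i = 1 \<and> j = 1 \<longrightarrow> f = g 2 2)" "(i = 2 \<and> j = 2 \<longrightarrow> f = g 1 1)"
      "(i = 1 \<and> j = 2 \<longrightarrow> f = (\<lambda>y. - g 1 2 y))" "(i = 2 \<and> j = 1 \<longrightarrow> f = (\<lambda>y. - g 2 1 y))"
    using ginv_local[OF x, of i j] by (elim exE conjE) (rule that; assumption)
  have fd: "f differentiable at x" using f(2) g_diff[OF x] by auto
  have dd: "(\<lambda>y. g 1 1 y * g 2 2 y - g 1 2 y * g 2 1 y) differentiable at x"
    using g_diff[OF x] by simp
  have "pd k (ginv g i j) x = pd k (\<lambda>y. f y / (g 1 1 y * g 2 2 y - g 1 2 y * g 2 1 y)) x"
    by (rule pd_local[OF openU x]) (use f(1) fd dd det_pos[OF x] in auto)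
  also have "\<dots> = (pd k f x * (g 1 1 x * g 2 2 x - g 1 2 x * g 2 1 x)
       - f x * pd k (\<lambda>y. g 1 1 y * g 2 2 y - g 1 2 y * g 2 1 y) x)
       / ((g 1 1 x * g 2 2 x - g 1 2 x * g 2 1 x) * (g 1 1 x * g 2 2 x - g 1 2 x * g 2 1 x))"
    using fd dd det_pos[OF x] by (simp add: pd_divide)
  also have "pd k (\<lambda>y. g 1 1 y * g 2 2 y - g 1 2 y * g 2 1 y) x
     = g 1 1 x * pd k (g 2 2) x + pd k (g 1 1) x * g 2 2 x - (g 1 2 x * pd k (g 2 1) x + pd k (g 1 2) x * g 2 1 x)"
    using g_diff[OF x] by (simp add: pd_diff pd_mult)
  finally have e: "pd k (ginv g i j) x = (pd k f x * (g 1 1 x * g 2 2 x - g 1 2 x * g 2 1 x) -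
    f x * (g 1 1 x * pd k (g 2 2) x + pd k (g 1 1) x * g 2 2 x - (g 1 2 x * pd k (g 2 1) x + pd k (g 1 2) x * g 2 1 x))) /
    ((g 1 1 x * g 2 2 x - g 1 2 x * g 2 1 x) * (g 1 1 x * g 2 2 x - g 1 2 x * g 2 1 x))" .
  have neg: "pd k (\<lambda>y. - g a b y) x = - pd k (g a b) x" for a b
    using pd_cmult[of "g a b" x k "-1"] g_diff[OF x] by simp
  have s1: "g 2 1 x = g 1 2 x" using g_sym[OF x] by simp
  have s2: "pd k (g 2 1) x = pd k (g 1 2) x" using dg_sym[OF x] by simp
  define d where "d = g 1 1 x * g 2 2 x - g 1 2 x * g 1 2 x"
  have dn: "d \<noteq> 0" using det_pos[OF x] s1 by (simp add: d_def)
  have P: "ginv g 1 1 x = g 2 2 x / d" "ginv g 1 2 x = - g 1 2 x / d"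
     "ginv g 2 1 x = - g 1 2 x / d" "ginv g 2 2 x = g 1 1 x / d"
    using ginv_formula[OF x] s1 by (simp_all add: d_def)
  have e': "pd k (ginv g i j) x = (pd k f x * d - f x * (g 1 1 x * pd k (g 2 2) x
       + pd k (g 1 1) x * g 2 2 x - 2 * g 1 2 x * pd k (g 1 2) x)) / (d * d)"
    unfolding e s1 s2 d_def by (simp add: algebra_simps)
  have "i = 1 \<or> i = 2" "j = 1 \<or> j = 2" using exhaust_2 by auto
  then show ?thesis using f(3-6) unfolding e'
    apply (elim disjE)
    apply (simp_all add: neg sum_2 P s1 s2 field_simps dn)
    apply (simp_all add: d_def algebra_simps)
    done
qed

thm_deps dP

end


lemma tl_alg:
  fixes P G h :: "2\<Rightarrow>2\<Rightarrow>real"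
  assumes s: "P 2 1 = P 1 2" "G 2 1 = G 1 2" "h 2 1 = h 1 2"
   and i: "G 1 1 * P 1 1 + G 1 2 * P 1 2 = 1" "G 1 1 * P 1 2 + G 1 2 * P 2 2 = 0"
          "G 1 2 * P 1 1 + G 2 2 * P 1 2 = 0" "G 1 2 * P 1 2 + G 2 2 * P 2 2 = 1"
  shows "(\<Sum>i\<in>UNIV. \<Sum>j\<in>UNIV. \<Sum>k\<in>UNIV. \<Sum>l\<in>UNIV. P i k * P j l *
      (h i j - (\<Sum>i\<in>UNIV. \<Sum>j\<in>UNIV. P i j * h i j) / 2 * G i j) *
      (h k l - (\<Sum>i\<in>UNIV. \<Sum>j\<in>UNIV. P i j * h i j) / 2 * G k l))
   = (\<Sum>i\<in>UNIV. \<Sum>j\<in>UNIV. \<Sum>k\<in>UNIV. \<Sum>l\<in>UNIV. P i k * P j l * h i j * h k l)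
     - (\<Sum>i\<in>UNIV. \<Sum>j\<in>UNIV. P i j * h i j) * (\<Sum>i\<in>UNIV. \<Sum>j\<in>UNIV. P i j * h i j) / 2"
  apply (simp only: sum_2 s)
  using i by algebra


thm_deps tl_alg

definition cH :: "(2\<Rightarrow>2\<Rightarrow>real) \<Rightarrow> (2\<Rightarrow>2\<Rightarrow>real) \<Rightarrow> real" where
  "cH P h = (\<Sum>i\<in>UNIV. \<Sum>j\<in>UNIV. P i j * h i j)"
definition cdH :: "(2\<Rightarrow>2\<Rightarrow>real) \<Rightarrow> (2\<Rightarrow>2\<Rightarrow>2\<Rightarrow>real) \<Rightarrow> 2 \<Rightarrow> real" where
  "cdH P T k = (\<Sum>i\<in>UNIV. \<Sum>j\<in>UNIV. P i j * T k i j)"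
definition cN :: "(2\<Rightarrow>2\<Rightarrow>real) \<Rightarrow> (2\<Rightarrow>2\<Rightarrow>real) \<Rightarrow> real" where
  "cN P h = (\<Sum>i\<in>UNIV. \<Sum>j\<in>UNIV. \<Sum>k\<in>UNIV. \<Sum>l\<in>UNIV. P i k * P j l * h i j * h k l) - cH P h * cH P h / 2"
definition chu :: "(2\<Rightarrow>2\<Rightarrow>real) \<Rightarrow> (2\<Rightarrow>2\<Rightarrow>real) \<Rightarrow> 2 \<Rightarrow> 2 \<Rightarrow> real" where
  "chu P h a b = (\<Sum>i\<in>UNIV. \<Sum>j\<in>UNIV. P a i * P b j * h i j) - cH P h / 2 * P a b"
definition cdN :: "(2\<Rightarrow>2\<Rightarrow>real) \<Rightarrow> (2\<Rightarrow>2\<Rightarrow>real) \<Rightarrow> (2\<Rightarrow>2\<Rightarrow>2\<Rightarrow>real) \<Rightarrow> 2 \<Rightarrow> real" where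
  "cdN P h T k = 2 * (\<Sum>i\<in>UNIV. \<Sum>j\<in>UNIV. chu P h i j * T k i j)"

lemma core:
  fixes P h :: "2\<Rightarrow>2\<Rightarrow>real" and T :: "2\<Rightarrow>2\<Rightarrow>2\<Rightarrow>real"
  assumes s1: "P 2 1 = P 1 2" and s2: "h 2 1 = h 1 2"
    and t1: "T 1 2 1 = T 1 1 2" "T 2 1 1 = T 1 1 2" "T 2 1 2 = T 1 2 2" "T 2 2 1 = T 1 2 2"
  shows "2 * cN P h * ((\<Sum>i\<in>UNIV. \<Sum>j\<in>UNIV. \<Sum>k\<in>UNIV. \<Sum>a\<in>UNIV. \<Sum>b\<in>UNIV. \<Sum>c\<in>UNIV.
      P i a * P j b * P k c * T i j k * T a b c) - (\<Sum>i\<in>UNIV. \<Sum>j\<in>UNIV. P i j * cdH P T i * cdH P T j))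
    = (\<Sum>i\<in>UNIV. \<Sum>j\<in>UNIV. P i j * cdN P h T i * cdN P h T j)
      - 2 * (\<Sum>a\<in>UNIV. \<Sum>b\<in>UNIV. chu P h a b * cdN P h T a * cdH P T b)"
  unfolding cH_def cdH_def cN_def chu_def cdN_def
  apply (simp only: sum_2 s1 s2 t1)
  by algebra

thm_deps core

lemma tl_alg2:
  fixes P G h :: "2\<Rightarrow>2\<Rightarrow>real" and u v :: "2 \<Rightarrow> real"
  assumes s: "P 2 1 = P 1 2" "G 2 1 = G 1 2" "h 2 1 = h 1 2"
   and i: "G 1 1 * P 1 1 + G 1 2 * P 1 2 = 1" "G 1 1 * P 1 2 + G 1 2 * P 2 2 = 0"
          "G 1 2 * P 1 1 + G 2 2 * P 1 2 = 0" "G 1 2 * P 1 2 + G 2 2 * P 2 2 = 1"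
  shows "(\<Sum>i\<in>UNIV. \<Sum>j\<in>UNIV. \<Sum>a\<in>UNIV. \<Sum>b\<in>UNIV.
      (h i j - (\<Sum>i\<in>UNIV. \<Sum>j\<in>UNIV. P i j * h i j) / 2 * G i j) * P i a * u a * P j b * v b)
   = (\<Sum>a\<in>UNIV. \<Sum>b\<in>UNIV. chu P h a b * u a * v b)"
  unfolding chu_def cH_def
  apply (simp only: sum_2 s)
  using i by algebra

thm_deps tl_alg2

context
  fixes U :: "pt set" and g h :: "2 \<Rightarrow> 2 \<Rightarrow> pt \<Rightarrow> real"
  assumes metric: "riem_metric U g" and h_smooth: "\<forall>i j. smooth_on U (h i j)"
    and h_sym: "\<forall>y\<in>U. \<forall>i j. h i j y = h j i y"
begin

lemma syms:
  assumes x: "x \<in> U"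
  shows "ginv g 2 1 x = ginv g 1 2 x" "h 2 1 x = h 1 2 x" "g 2 1 x = g 1 2 x"
    "pd k (g 2 1) x = pd k (g 1 2) x" "pd k (h 2 1) x = pd k (h 1 2) x"
  using ginv_formula[OF metric h_smooth h_sym x] g_sym[OF metric h_smooth h_sym x, of 2 1]
    h_sym x dg_sym[OF metric h_smooth h_sym x] dh_sym[OF metric h_smooth h_sym x]
  by auto

thm_deps syms

lemma F1:
  assumes x: "x \<in> U"
  shows "pd k (trH g h) x = cdH (\<lambda>i j. ginv g i j x) (\<lambda>k i j. covD g h k i j x) k"
proof -
  note gd = ginv_diff[OF metric h_smooth h_sym x] and hd = h_diff[OF metric h_smooth h_sym x]
  have "trH g h = (\<lambda>y. \<Sum>i\<in>UNIV. \<Sum>j\<in>UNIV. ginv g i j y * h i j y)"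
    by (rule ext) (simp add: trH_def)
  then have "pd k (trH g h) x = (\<Sum>i\<in>UNIV. \<Sum>j\<in>UNIV. ginv g i j x * pd k (h i j) x + pd k (ginv g i j) x * h i j x)"
    by (simp add: pd_sum pd_mult gd hd)
  also have "\<dots> = cdH (\<lambda>i j. ginv g i j x) (\<lambda>k i j. covD g h k i j x) k"
    unfolding dP[OF metric h_smooth h_sym x] cdH_def covD_def christoffel_def
    using exhaust_2[of k]
    by (elim disjE) (simp_all add: sum_2 syms[OF x] algebra_simps)
  finally show ?thesis .
qed

thm_deps F1

lemma trH_diff:
  assumes x: "x \<in> U"
  shows "trH g h differentiable at x"
proof -
  note gd = ginv_diff[OF metric h_smooth h_sym x] and hd = h_diff[OF metric h_smooth h_sym x]
  have "trH g h = (\<lambda>y. \<Sum>i\<in>UNIV. \<Sum>j\<in>UNIV. ginv g i j y * h i j y)"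
    by (rule ext) (simp add: trH_def)
  then show ?thesis by (simp add: gd hd)
qed

thm_deps trH_diff

lemma inv_eqs:
  assumes y: "y \<in> U"
  shows "g 1 1 y * ginv g 1 1 y + g 1 2 y * ginv g 1 2 y = 1" "g 1 1 y * ginv g 1 2 y + g 1 2 y * ginv g 2 2 y = 0"
        "g 1 2 y * ginv g 1 1 y + g 2 2 y * ginv g 1 2 y = 0" "g 1 2 y * ginv g 1 2 y + g 2 2 y * ginv g 2 2 y = 1"
proof -
  have s1: "g 2 1 y = g 1 2 y" using syms[OF y] by auto
  define d where "d = g 1 1 y * g 2 2 y - g 1 2 y * g 1 2 y"
  have dn: "d \<noteq> 0" using det_pos[OF metric h_smooth h_sym y] s1 by (simp add: d_def)
  have P: "ginv g 1 1 y = g 2 2 y / d" "ginv g 1 2 y = - g 1 2 y / d"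
     "ginv g 2 1 y = - g 1 2 y / d" "ginv g 2 2 y = g 1 1 y / d"
    using ginv_formula[OF metric h_smooth h_sym y] s1 by (simp_all add: d_def)
  show "g 1 1 y * ginv g 1 1 y + g 1 2 y * ginv g 1 2 y = 1" "g 1 1 y * ginv g 1 2 y + g 1 2 y * ginv g 2 2 y = 0"
        "g 1 2 y * ginv g 1 1 y + g 2 2 y * ginv g 1 2 y = 0" "g 1 2 y * ginv g 1 2 y + g 2 2 y * ginv g 2 2 y = 1"
    unfolding P using dn apply (simp_all add: field_simps) apply (simp_all add: d_def) done
qed

thm_deps inv_eqs

lemma Nloc:
  assumes y: "y \<in> U"
  shows "norm2_2 g (traceless g h) y = (\<Sum>i\<in>UNIV. \<Sum>j\<in>UNIV. \<Sum>k\<in>UNIV. \<Sum>l\<in>UNIV.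
      ginv g i k y * ginv g j l y * h i j y * h k l y) - trH g h y * trH g h y / 2"
  unfolding norm2_2_def traceless_def trH_def
  by (rule tl_alg[of "\<lambda>i j. ginv g i j y" "\<lambda>i j. g i j y" "\<lambda>i j. h i j y"])
     (use syms[OF y] inv_eqs[OF y] in auto)

thm_deps Nloc

lemma F2:
  assumes x: "x \<in> U"
  shows "pd k (norm2_2 g (traceless g h)) x = cdN (\<lambda>i j. ginv g i j x) (\<lambda>i j. h i j x) (\<lambda>k i j. covD g h k i j x) k"
proof -
  note gd = ginv_diff[OF metric h_smooth h_sym x] and hd = h_diff[OF metric h_smooth h_sym x]
    and td = trH_diff[OF x]
  let ?NN = "\<lambda>y. (\<Sum>i\<in>UNIV. \<Sum>j\<in>UNIV. \<Sum>k\<in>UNIV. \<Sum>l\<in>UNIV.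
      ginv g i k y * ginv g j l y * h i j y * h k l y) - trH g h y * trH g h y / 2"
  have nd: "?NN differentiable at x" using gd hd td by simp
  have "pd k (norm2_2 g (traceless g h)) x = pd k ?NN x"
    by (rule pd_local[OF openU[OF metric h_smooth h_sym] x _ nd]) (rule Nloc)
  also have "\<dots> = cdN (\<lambda>i j. ginv g i j x) (\<lambda>i j. h i j x) (\<lambda>k i j. covD g h k i j x) k"
    apply (simp add: pd_sum pd_mult pd_diff pd_divide pd_const gd hd td)
    apply (simp only: F1[OF x] dP[OF metric h_smooth h_sym x] cdN_def chu_def cH_def cdH_def covD_def christoffel_def trH_def)
    using exhaust_2[of k] apply (elim disjE)
    apply (simp only: sum_2 syms[OF x]; thin_tac "k = _"; algebra)+
    done
  finally show ?thesis .
qed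

thm_deps F2

lemma Tsym:
  assumes x: "x \<in> U"
  shows "covD g h k i j x = covD g h k j i x"
proof -
  have "k = 1 \<or> k = 2" "i = 1 \<or> i = 2" "j = 1 \<or> j = 2" using exhaust_2 by auto
  then show ?thesis
    unfolding covD_def christoffel_def
    by (elim disjE) (simp_all add: sum_2 syms[OF x] algebra_simps)
qed

thm_deps Tsym

end

lemma lemma4p2_aux:
  fixes U :: "(real ^ 2) set"
    and g h :: "2 \<Rightarrow> 2 \<Rightarrow> real ^ 2 \<Rightarrow> real"
  assumes metric: "riem_metric U g"
    and h_smooth: "\<forall>i j. smooth_on U (h i j)"
    and h_sym: "\<forall>x\<in>U. \<forall>i j. h i j x = h j i x"
    and codazzi: "\<forall>x\<in>U. \<forall>i j k. covD g h i j k x = covD g h j i k x"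
    and x: "x \<in> U"
  shows "2 * norm2_2 g (traceless g h) x *
           (norm2_3 g (covD g h) x - grad_norm2 g (trH g h) x)
         = grad_norm2 g (norm2_2 g (traceless g h)) x
           - 2 * (\<Sum>i\<in>UNIV. \<Sum>j\<in>UNIV. \<Sum>a\<in>UNIV. \<Sum>b\<in>UNIV.
                  traceless g h i j x * ginv g i a x * pd a (norm2_2 g (traceless g h)) x
                    * ginv g j b x * pd b (trH g h) x)"
proof -
  let ?P = "\<lambda>i j. ginv g i j x" and ?hx = "\<lambda>i j. h i j x" and ?T = "\<lambda>k i j. covD g h k i j x"
  note S = syms[OF metric h_smooth h_sym x]
  have e1: "\<And>k. pd k (trH g h) x = cdH ?P ?T k" by (rule F1[OF metric h_smooth h_sym x])
  have e2: "\<And>k. pd k (norm2_2 g (traceless g h)) x = cdN ?P ?hx ?T k" by (rule F2[OF metric h_smooth h_sym x])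
  have e3: "norm2_2 g (traceless g h) x = cN ?P ?hx"
    unfolding Nloc[OF metric h_smooth h_sym x] cN_def cH_def trH_def by simp
  have e4: "(\<Sum>i\<in>UNIV. \<Sum>j\<in>UNIV. \<Sum>a\<in>UNIV. \<Sum>b\<in>UNIV.
                  traceless g h i j x * ginv g i a x * cdN ?P ?hx ?T a
                    * ginv g j b x * cdH ?P ?T b)
      = (\<Sum>a\<in>UNIV. \<Sum>b\<in>UNIV. chu ?P ?hx a b * cdN ?P ?hx ?T a * cdH ?P ?T b)"
    unfolding traceless_def trH_def
    by (rule tl_alg2[of ?P "\<lambda>i j. g i j x" ?hx]) (use S inv_eqs[OF metric h_smooth h_sym x] in auto)
  have ts: "?T 1 2 1 = ?T 1 1 2" "?T 2 1 1 = ?T 1 1 2" "?T 2 1 2 = ?T 1 2 2" "?T 2 2 1 = ?T 1 2 2"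
    using Tsym[OF metric h_smooth h_sym x] codazzi x by metis+
  show ?thesis
    unfolding norm2_3_def grad_norm2_def e1 e2 e3 e4
    by (rule core) (use S ts in auto)
qed



thm_deps lemma4p2_aux

theorem lemma4p2:
  fixes U :: "(real ^ 2) set"
    and g h :: "2 \<Rightarrow> 2 \<Rightarrow> real ^ 2 \<Rightarrow> real"
  assumes metric: "riem_metric U g"
    and h_smooth: "\<forall>i j. smooth_on U (h i j)"
    and h_sym: "\<forall>x\<in>U. \<forall>i j. h i j x = h j i x"
    and codazzi: "\<forall>x\<in>U. \<forall>i j k. covD g h i j k x = covD g h j i k x"
    and x: "x \<in> U"
  shows "2 * norm2_2 g (traceless g h) x *
           (norm2_3 g (covD g h) x - grad_norm2 g (trH g h) x)
         = grad_norm2 g (norm2_2 g (traceless g h)) x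
           - 2 * (\<Sum>i\<in>UNIV. \<Sum>j\<in>UNIV. \<Sum>a\<in>UNIV. \<Sum>b\<in>UNIV.
                  traceless g h i j x * ginv g i a x * pd a (norm2_2 g (traceless g h)) x
                    * ginv g j b x * pd b (trH g h) x)"
  by (rule lemma4p2_aux[OF metric h_smooth h_sym codazzi x])

thm_deps lemma4p2

end
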